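(* Let $\Omega_\Gamma\subset\mathbb{R}^2$ be a bounded simply connected domain with analytic boundary and $\psi$ real-analytic on $\overline{\Omega_\Gamma}$ with no non-isolated critical points in $\Omega_\Gamma$. Suppose $\Delta\psi=F(\psi)$ in $\Omega_\Gamma$ for a continuous $F$ with $F(0)=1$, and $\psi=0$, $\nabla\psi=0$ on $\partial\Omega_\Gamma$. If $F$ is not real-analytic at $s=0$, then $\psi\ge0$ in $\Omega_\Gamma$. *)

theory Defs
  imports "HOL-Analysis.Analysis"
begin

definition real_analytic_at1 :: "(real \<Rightarrow> real) \<Rightarrow> real \<Rightarrow> bool" where
  "real_analytic_at1 f x0 \<longleftrightarrow>
     (\<exists>r>0. \<exists>a::nat \<Rightarrow> real. \<forall>x. \<bar>x - x0\<bar> < r \<longrightarrow> (\<lambda>n. a n * (x - x0) ^ n) sums f x)"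

definition real_analytic_at2 :: "(real \<times> real \<Rightarrow> real) \<Rightarrow> real \<times> real \<Rightarrow> bool" where
  "real_analytic_at2 f z \<longleftrightarrow>
     (\<exists>r>0. \<exists>a::nat \<times> nat \<Rightarrow> real. \<forall>p\<in>ball z r.
        ((\<lambda>(i,j). a (i,j) * (fst p - fst z) ^ i * (snd p - snd z) ^ j) has_sum f p) UNIV)"

definition analytic_boundary :: "(real \<times> real) set \<Rightarrow> bool" where
  "analytic_boundary \<Omega> \<longleftrightarrow>
     (\<exists>\<gamma>::real \<Rightarrow> real \<times> real.
        (\<forall>t. \<gamma> (t + 1) = \<gamma> t) \<and> inj_on \<gamma> {0..<1} \<and>
        (\<forall>t. real_analytic_at1 (fst \<circ> \<gamma>) t \<and> real_analytic_at1 (snd \<circ> \<gamma>) t) \<and>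
        (\<forall>t. \<gamma> differentiable at t \<and> vector_derivative \<gamma> (at t) \<noteq> 0) \<and>
        \<gamma> ` {0..1} = frontier \<Omega>)"

definition laplacian :: "(real \<times> real \<Rightarrow> real) \<Rightarrow> real \<times> real \<Rightarrow> real" where
  "laplacian f p =
     deriv (\<lambda>x. deriv (\<lambda>x'. f (x', snd p)) x) (fst p)
   + deriv (\<lambda>y. deriv (\<lambda>y'. f (fst p, y')) y) (snd p)"

definition critical_point :: "(real \<times> real \<Rightarrow> real) \<Rightarrow> real \<times> real \<Rightarrow> bool" where
  "critical_point f p \<longleftrightarrow> (f has_derivative (\<lambda>h. 0)) (at p)"

end

theory Submission
  imports Defs "HOL-Complex_Analysis.Complex_Analysis"
begin

definition dterm :: "(nat\<times>nat \<Rightarrow> real) \<Rightarrow> real \<Rightarrow> real \<Rightarrow> nat\<times>nat \<Rightarrow> real" where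
  "dterm a s u = (\<lambda>(i,j). a (i,j) * s ^ i * u ^ j)"
definition dser :: "(nat\<times>nat \<Rightarrow> real) \<Rightarrow> real \<Rightarrow> real \<Rightarrow> real" where
  "dser a s u = infsum (dterm a s u) UNIV"
definition AS :: "(nat\<times>nat \<Rightarrow> real) \<Rightarrow> real \<Rightarrow> bool" where
  "AS a \<rho> \<longleftrightarrow> \<rho> > 0 \<and> (\<lambda>(i,j). \<bar>a (i,j)\<bar> * \<rho> ^ i * \<rho> ^ j) summable_on UNIV"
definition cc :: "(nat\<times>nat \<Rightarrow> real) \<Rightarrow> real \<Rightarrow> nat \<Rightarrow> real" where
  "cc a u i = (\<Sum>\<^sub>\<infinity>j. a (i,j) * u ^ j)"
definition swp :: "(nat\<times>nat \<Rightarrow> real) \<Rightarrow> (nat\<times>nat \<Rightarrow> real)" where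
  "swp a = (\<lambda>(i,j). a (j,i))"

lemma AS_abs:
  assumes "AS a \<rho>" "\<bar>s\<bar> \<le> \<rho>" "\<bar>u\<bar> \<le> \<rho>"
  shows "(\<lambda>x. norm (dterm a s u x)) summable_on UNIV"
proof (rule Infinite_Sum.abs_summable_on_comparison_test)
  let ?g = "\<lambda>(i,j). \<bar>a (i,j)\<bar> * \<rho> ^ i * \<rho> ^ j"
  have r: "\<rho> > 0" using assms(1) unfolding AS_def by auto
  have "?g summable_on UNIV" using assms(1) unfolding AS_def by auto
  moreover have "\<And>x. norm (?g x) = ?g x" using r by (auto simp: abs_mult)
  ultimately show "(\<lambda>x. norm (?g x)) summable_on UNIV" by simp
  fix x :: "nat \<times> nat"
  obtain i j where x: "x = (i,j)" by force
  have "\<bar>s\<bar>^i \<le> \<rho>^i" by (rule power_mono) (use assms in auto)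
  moreover have "\<bar>u\<bar>^j \<le> \<rho>^j" by (rule power_mono) (use assms in auto)
  ultimately have "\<bar>a (i,j)\<bar> * \<bar>s\<bar>^i * \<bar>u\<bar>^j \<le> \<bar>a (i,j)\<bar> * \<rho> ^ i * \<rho> ^ j"
    using r by (intro mult_mono) (auto)
  then show "norm (dterm a s u x) \<le> norm (?g x)" using r
    by (simp add: x dterm_def abs_mult power_abs)
qed

lemma AS_summ: "AS a \<rho> \<Longrightarrow> \<bar>s\<bar> \<le> \<rho> \<Longrightarrow> \<bar>u\<bar> \<le> \<rho> \<Longrightarrow> dterm a s u summable_on UNIV"
  using AS_abs abs_summable_summable by blast

lemma AS_row_summ:
  assumes "AS a \<rho>" "\<bar>s\<bar> \<le> \<rho>" "\<bar>u\<bar> \<le> \<rho>"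
  shows "(\<lambda>j. dterm a s u (i,j)) summable_on UNIV"
proof -
  have "(\<lambda>(x,y). dterm a s u (x,y)) summable_on Sigma UNIV (\<lambda>_. UNIV)"
    using AS_summ[OF assms] by simp
  from summable_on_SigmaD1[OF this, of i] show ?thesis by simp
qed

lemma AS_row_hs:
  assumes "AS a \<rho>" "\<bar>s\<bar> \<le> \<rho>" "\<bar>u\<bar> \<le> \<rho>"
  shows "((\<lambda>j. dterm a s u (i,j)) has_sum (cc a u i * s^i)) UNIV"
proof -
  have e: "(\<lambda>j. dterm a s u (i,j)) = (\<lambda>j. s^i * (a (i,j) * u^j))"
    by (auto simp: dterm_def fun_eq_iff)
  have "s^i \<noteq> 0 \<Longrightarrow> (\<lambda>j. a (i,j) * u^j) summable_on UNIV"
  proof -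
    assume nz: "s^i \<noteq> 0"
    have "(\<lambda>j. inverse (s^i) * (s^i * (a (i,j) * u^j))) summable_on UNIV"
      using summable_on_cmult_right[OF AS_row_summ[OF assms, of i, unfolded e]] .
    moreover have "(\<lambda>j. inverse (s^i) * (s^i * (a (i,j) * u^j))) = (\<lambda>j. a (i,j) * u^j)"
      using nz by (auto simp: fun_eq_iff)
    ultimately show ?thesis by simp
  qed
  then have "infsum (\<lambda>j. s^i * (a (i,j) * u^j)) UNIV = s^i * cc a u i"
    unfolding cc_def by (rule infsum_cmult_right)
  then show ?thesis using AS_row_summ[OF assms, of i] e
    by (metis has_sum_infsum mult.commute)
qed

lemma AS_row:
  assumes "AS a \<rho>" "\<bar>s\<bar> \<le> \<rho>" "\<bar>u\<bar> \<le> \<rho>"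
  shows "(\<lambda>i. cc a u i * s^i) sums dser a s u"
proof -
  have "(dterm a s u has_sum dser a s u) (Sigma UNIV (\<lambda>_. UNIV))"
    using AS_summ[OF assms] unfolding dser_def by (simp add: has_sum_infsum)
  from has_sum_Sigma'[OF this AS_row_hs[OF assms]] show ?thesis
    by (rule has_sum_imp_sums)
qed

lemma bij_swap: "bij_betw prod.swap (UNIV::(nat\<times>nat) set) UNIV"
  by (simp add: bij_betw_def)

lemma dser_swp: "dser (swp a) u s = dser a s u"
proof -
  have "dser (swp a) u s = infsum (\<lambda>x. dterm a s u (prod.swap x)) UNIV"
    unfolding dser_def by (intro infsum_cong) (auto simp: dterm_def swp_def)
  also have "\<dots> = dser a s u" unfolding dser_def by (rule infsum_reindex_bij_betw[OF bij_swap])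
  finally show ?thesis .
qed

lemma AS_swp: "AS (swp a) \<rho> \<longleftrightarrow> AS a \<rho>"
proof -
  have "(\<lambda>(i,j). \<bar>swp a (i,j)\<bar> * \<rho> ^ i * \<rho> ^ j) = (\<lambda>x. (\<lambda>(i,j). \<bar>a (i,j)\<bar> * \<rho> ^ i * \<rho> ^ j) (prod.swap x))"
    by (auto simp: swp_def fun_eq_iff)
  then show ?thesis unfolding AS_def
    using summable_on_reindex_bij_betw[OF bij_swap, of "\<lambda>(i,j). \<bar>a (i,j)\<bar> * \<rho> ^ i * \<rho> ^ j"]
    by simp
qed

lemma pow_bound:
  fixes m \<rho> :: real
  assumes "0 \<le> m" "m \<le> \<rho>" "0 < \<rho>" "k \<le> n"
  shows "m ^ n \<le> (m/\<rho>)^k * \<rho>^n"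
proof -
  have "m ^ n = m^k * m^(n-k)" using assms(4) by (simp flip: power_add)
  also have "\<dots> \<le> m^k * \<rho>^(n-k)" using assms by (intro mult_left_mono power_mono) auto
  also have "\<dots> = (m/\<rho>)^k * \<rho>^n" using assms
    by (simp add: power_divide field_simps flip: power_add)
  finally show ?thesis .
qed

definition ASS :: "(nat\<times>nat \<Rightarrow> real) \<Rightarrow> real \<Rightarrow> real" where
  "ASS a \<rho> = (\<Sum>\<^sub>\<infinity>(i,j). \<bar>a (i,j)\<bar> * \<rho> ^ i * \<rho> ^ j)"

lemma finite_low: "finite {p::nat\<times>nat. fst p + snd p < k}"
  by (rule finite_subset[of _ "{..<k} \<times> {..<k}"]) auto

lemma AS_rem:
  assumes A: "AS a \<rho>" and su: "\<bar>s\<bar> \<le> m" "\<bar>u\<bar> \<le> m" and m: "m \<le> \<rho>"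
  shows "\<bar>dser a s u - (\<Sum>p\<in>{p. fst p + snd p < k}. dterm a s u p)\<bar> \<le> (m/\<rho>)^k * ASS a \<rho>"
proof -
  let ?L = "{p::nat\<times>nat. fst p + snd p < k}" and ?T = "{p::nat\<times>nat. k \<le> fst p + snd p}"
  let ?g = "\<lambda>(i,j). \<bar>a (i,j)\<bar> * \<rho> ^ i * \<rho> ^ j"
  have r: "\<rho> > 0" and gs: "?g summable_on UNIV" using A unfolding AS_def by auto
  have m0: "0 \<le> m" using su by linarith
  have s1: "\<bar>s\<bar> \<le> \<rho>" "\<bar>u\<bar> \<le> \<rho>" using su m by auto
  have U: "UNIV = ?L \<union> ?T" by auto
  have sm: "dterm a s u summable_on UNIV" using AS_summ[OF A s1] .
  have smT: "dterm a s u summable_on ?T" using summable_on_subset_banach[OF sm] by blast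
  have "dser a s u = infsum (dterm a s u) (?L \<union> ?T)" unfolding dser_def using U by simp
  also have "\<dots> = infsum (dterm a s u) ?L + infsum (dterm a s u) ?T"
    by (rule infsum_Un_disjoint) (use finite_low smT in auto)
  finally have e: "dser a s u - (\<Sum>p\<in>?L. dterm a s u p) = infsum (dterm a s u) ?T"
    using finite_low by simp
  have abT: "(\<lambda>x. norm (dterm a s u x)) summable_on ?T"
    using summable_on_subset_banach[OF AS_abs[OF A s1]] by blast
  have "\<bar>infsum (dterm a s u) ?T\<bar> \<le> infsum (\<lambda>x. norm (dterm a s u x)) ?T"
    using norm_infsum_bound[of "dterm a s u" ?T] abT by simp
  also have "\<dots> \<le> infsum (\<lambda>x. (m/\<rho>)^k * ?g x) ?T"
  proof (rule infsum_mono)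
    show "(\<lambda>x. (m/\<rho>)^k * ?g x) summable_on ?T"
      by (rule summable_on_cmult_right, rule summable_on_subset_banach[OF gs]) auto
    fix x assume "x \<in> ?T"
    then obtain i j where x: "x = (i,j)" and kk: "k \<le> i + j" by force
    have "\<bar>s\<bar>^i * \<bar>u\<bar>^j \<le> m^i * m^j" using su by (intro mult_mono power_mono) auto
    also have "\<dots> = m^(i+j)" by (simp add: power_add)
    also have "\<dots> \<le> (m/\<rho>)^k * \<rho>^(i+j)" by (rule pow_bound) (use m0 m r kk in auto)
    finally have "\<bar>a (i,j)\<bar> * (\<bar>s\<bar>^i * \<bar>u\<bar>^j) \<le> \<bar>a (i,j)\<bar> * ((m/\<rho>)^k * \<rho>^(i+j))"
      by (rule mult_left_mono) auto
    then show "norm (dterm a s u x) \<le> (m/\<rho>)^k * ?g x"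
      by (simp add: x dterm_def abs_mult power_abs power_add mult_ac)
  qed (use abT in auto)
  also have "\<dots> = (m/\<rho>)^k * infsum ?g ?T"
    by (rule infsum_cmult_right, rule summable_on_subset_banach[OF gs]) auto
  also have "\<dots> \<le> (m/\<rho>)^k * ASS a \<rho>"
    unfolding ASS_def
    by (intro mult_left_mono infsum_mono2 summable_on_subset_banach[OF gs])
       (use m0 r in \<open>auto simp: gs\<close>)
  finally show ?thesis using e by simp
qed

lemma low1: "{p::nat\<times>nat. fst p + snd p < 1} = {(0,0)}" by auto
lemma low2: "{p::nat\<times>nat. fst p + snd p < 2} = {(0,0),(1,0),(0,1)}"
proof -
  have "\<And>i j::nat. i + j < 2 \<Longrightarrow> (i,j) \<in> {(0,0),(1,0),(0,1)}"
  proof -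
    fix i j :: nat assume "i + j < 2"
    then have "i \<le> 1" "j \<le> 1" by auto
    then show "(i,j) \<in> {(0,0),(1,0),(0,1)}" using \<open>i+j<2\<close>
      by (cases i; cases j) (auto simp: numeral_2_eq_2 le_Suc_eq)
  qed
  then show ?thesis by auto
qed
lemma low3: "{p::nat\<times>nat. fst p + snd p < 3} = {(0,0),(1,0),(0,1),(2,0),(1,1),(0,2)}"
proof -
  have "\<And>i j::nat. i + j < 3 \<Longrightarrow> (i,j) \<in> {(0,0),(1,0),(0,1),(2,0),(1,1),(0,2)}"
  proof -
    fix i j :: nat assume "i + j < 3"
    then have "i \<le> 2" "j \<le> 2" by auto
    then show "(i,j) \<in> {(0,0),(1,0),(0,1),(2,0),(1,1),(0,2)}" using \<open>i+j<3\<close>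
      by (cases i; cases j) (auto simp: numeral_2_eq_2 numeral_3_eq_3 le_Suc_eq)
  qed
  then show ?thesis by auto
qed

lemma sum_low1: "(\<Sum>p\<in>{p. fst p + snd p < 1}. dterm a s u p) = a (0,0)"
  unfolding low1 by (simp add: dterm_def)
lemma sum_low2: "(\<Sum>p\<in>{p. fst p + snd p < 2}. dterm a s u p) = a (0,0) + a (1,0) * s + a (0,1) * u"
  unfolding low2 by (simp add: dterm_def)
lemma sum_low3: "(\<Sum>p\<in>{p. fst p + snd p < 3}. dterm a s u p) =
   a (0,0) + a (1,0) * s + a (0,1) * u + a (2,0) * s^2 + a (1,1) * s * u + a (0,2) * u^2"
  unfolding low3 by (simp add: dterm_def)

lemma ASS_nonneg: "ASS a \<rho> \<ge> 0" if "\<rho> \<ge> 0"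
  unfolding ASS_def using that by (intro infsum_nonneg) auto

definition REP :: "(real \<times> real \<Rightarrow> real) \<Rightarrow> real \<times> real \<Rightarrow> (nat\<times>nat \<Rightarrow> real) \<Rightarrow> real \<Rightarrow> bool" where
  "REP \<psi> z a \<rho> \<longleftrightarrow> AS a \<rho> \<and> (\<forall>s u. \<bar>s\<bar> \<le> \<rho> \<longrightarrow> \<bar>u\<bar> \<le> \<rho> \<longrightarrow> \<psi> (fst z + s, snd z + u) = dser a s u)"

lemma analytic_REP:
  assumes "real_analytic_at2 \<psi> z"
  obtains a \<rho> where "REP \<psi> z a \<rho>"
proof -
  obtain r a where r: "r > 0" and H: "\<forall>p\<in>ball z r.
        ((\<lambda>(i,j). a (i,j) * (fst p - fst z) ^ i * (snd p - snd z) ^ j) has_sum \<psi> p) UNIV"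
    using assms unfolding real_analytic_at2_def by blast
  define \<rho> where "\<rho> = r/3"
  have rp: "\<rho> > 0" using r by (simp add: \<rho>_def)
  have inb: "(fst z + s, snd z + u) \<in> ball z r" if "\<bar>s\<bar> \<le> \<rho>" "\<bar>u\<bar> \<le> \<rho>" for s u
  proof -
    have "\<bar>s\<bar>^2 \<le> \<rho>^2" by (rule power_mono) (use that in auto)
    moreover have "\<bar>u\<bar>^2 \<le> \<rho>^2" by (rule power_mono) (use that in auto)
    moreover have "\<rho>^2 > 0" using rp by simp
    moreover have "(3*\<rho>)^2 = 9*\<rho>^2" by (simp add: power_mult_distrib)
    ultimately have "s^2 + u^2 < (3*\<rho>)^2" unfolding power2_abs by linarith
    then have lt: "sqrt (s^2 + u^2) < sqrt ((3*\<rho>)^2)" by (rule real_sqrt_less_mono)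
    have "sqrt ((3*\<rho>)^2) = r" using rp unfolding \<rho>_def by simp
    then have "sqrt (s^2 + u^2) < r" using lt by simp
    moreover have "dist z (fst z + s, snd z + u) = sqrt (s^2 + u^2)"
    proof -
      obtain z1 z2 where z: "z = (z1,z2)" by force
      have "dist (z1,z2) (z1+s, z2+u) = sqrt ((dist z1 (z1+s))^2 + (dist z2 (z2+u))^2)"
        by (rule dist_Pair_Pair)
      also have "\<dots> = sqrt (s^2 + u^2)" by (simp add: dist_real_def)
      finally show ?thesis by (simp add: z)
    qed
    ultimately show ?thesis by simp
  qed
  have hs: "(dterm a s u has_sum \<psi> (fst z + s, snd z + u)) UNIV" if "\<bar>s\<bar> \<le> \<rho>" "\<bar>u\<bar> \<le> \<rho>" for s u
  proof -
    have "((\<lambda>(i,j). a (i,j) * (fst (fst z + s, snd z + u) - fst z) ^ i * (snd (fst z + s, snd z + u) - snd z) ^ j) has_sum \<psi> (fst z + s, snd z + u)) UNIV"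
      using H inb[OF that] by blast
    moreover have "(\<lambda>(i,j). a (i,j) * (fst (fst z + s, snd z + u) - fst z) ^ i * (snd (fst z + s, snd z + u) - snd z) ^ j) = dterm a s u"
      unfolding dterm_def by simp
    ultimately show ?thesis by simp
  qed
  have "dterm a \<rho> \<rho> summable_on UNIV" using hs[of \<rho> \<rho>] rp unfolding summable_on_def by auto
  then have "(\<lambda>x. norm (dterm a \<rho> \<rho> x)) summable_on UNIV"
    using summable_on_iff_abs_summable_on_real by blast
  moreover have "(\<lambda>x. norm (dterm a \<rho> \<rho> x)) = (\<lambda>(i,j). \<bar>a (i,j)\<bar> * \<rho> ^ i * \<rho> ^ j)"
    using rp by (auto simp: dterm_def fun_eq_iff abs_mult power_abs)
  ultimately have "AS a \<rho>" unfolding AS_def using rp by simp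
  moreover have "\<forall>s u. \<bar>s\<bar> \<le> \<rho> \<longrightarrow> \<bar>u\<bar> \<le> \<rho> \<longrightarrow> \<psi> (fst z + s, snd z + u) = dser a s u"
  proof (intro allI impI)
    fix s u assume "\<bar>s\<bar> \<le> \<rho>" "\<bar>u\<bar> \<le> \<rho>"
    from infsumI[OF hs[OF this]] show "\<psi> (fst z + s, snd z + u) = dser a s u"
      unfolding dser_def by simp
  qed
  ultimately show ?thesis using that unfolding REP_def by blast
qed

lemma cc_summable:
  assumes "AS a \<rho>" "\<bar>u\<bar> \<le> \<rho>" "\<bar>s\<bar> \<le> \<rho>"
  shows "summable (\<lambda>n. cc a u n * s^n)"
  using AS_row[OF assms(1,3,2)] sums_summable by blast

lemma dser_eq_suminf:
  assumes "AS a \<rho>" "\<bar>u\<bar> \<le> \<rho>" "\<bar>s\<bar> \<le> \<rho>"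
  shows "dser a s u = (\<Sum>n. cc a u n * s^n)"
  using AS_row[OF assms(1,3,2)] sums_unique by blast

lemma shift_deriv:
  fixes f g :: "real \<Rightarrow> real"
  assumes "\<And>y. y \<in> S \<Longrightarrow> f y = g (y - c)" "open S" "x \<in> S"
    "(g has_field_derivative D) (at (x - c))"
  shows "(f has_field_derivative D) (at x)"
proof -
  have "((\<lambda>y. g (y + (-c))) has_field_derivative D) (at x)"
    using assms(4) DERIV_shift[of g D x "-c"] by simp
  then show ?thesis
    by (rule has_field_derivative_transform_within_open[OF _ assms(2,3)]) (use assms(1) in simp)
qed

lemma dser_d1:
  assumes A: "AS a \<rho>" and u: "\<bar>u\<bar> \<le> \<rho>" and s: "\<bar>s\<bar> < \<rho>"
  shows "((\<lambda>s'. dser a s' u) has_field_derivative (\<Sum>n. diffs (cc a u) n * s^n)) (at s)"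
proof -
  have "((\<lambda>z. \<Sum>n. cc a u n * z^n) has_field_derivative (\<Sum>n. diffs (cc a u) n * s^n)) (at s)"
    by (rule termdiffs_strong'[where K=\<rho>]) (use cc_summable[OF A u] s in auto)
  then show ?thesis
    by (rule has_field_derivative_transform_within_open[where S="{-\<rho><..<\<rho>}"])
       (use s dser_eq_suminf[OF A u] in auto)
qed

lemma dser_d2:
  assumes A: "AS a \<rho>" and u: "\<bar>u\<bar> \<le> \<rho>" and s: "\<bar>s\<bar> < \<rho>"
  shows "((\<lambda>s'. \<Sum>n. diffs (cc a u) n * s'^n) has_field_derivative (\<Sum>n. diffs (diffs (cc a u)) n * s^n)) (at s)"
proof (rule termdiffs_strong'[where K=\<rho>])
  fix z :: real assume "norm z < \<rho>"
  then show "summable (\<lambda>n. diffs (cc a u) n * z^n)"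
    by (intro termdiff_converges[where K=\<rho>]) (use cc_summable[OF A u] in auto)
qed (use s in auto)

lemma REP_d2x:
  assumes R: "REP \<psi> z a \<rho>" and u: "\<bar>u\<bar> \<le> \<rho>" and s: "\<bar>s\<bar> < \<rho>"
  shows "deriv (\<lambda>x. deriv (\<lambda>x'. \<psi> (x', snd z + u)) x) (fst z + s) = (\<Sum>n. diffs (diffs (cc a u)) n * s^n)"
proof -
  have A: "AS a \<rho>" and eq: "\<And>s u. \<bar>s\<bar> \<le> \<rho> \<Longrightarrow> \<bar>u\<bar> \<le> \<rho> \<Longrightarrow> \<psi> (fst z + s, snd z + u) = dser a s u"
    using R unfolding REP_def by auto
  define S where "S = {fst z - \<rho> <..< fst z + \<rho>}"
  have oS: "open S" unfolding S_def by simp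
  have inS: "\<And>x. x \<in> S \<longleftrightarrow> \<bar>x - fst z\<bar> < \<rho>" unfolding S_def by auto
  have d1: "deriv (\<lambda>x'. \<psi> (x', snd z + u)) x = (\<Sum>n. diffs (cc a u) n * (x - fst z)^n)" if "x \<in> S" for x
  proof (rule DERIV_imp_deriv, rule shift_deriv[where S=S and c="fst z"])
    fix y assume "y \<in> S"
    then show "\<psi> (y, snd z + u) = dser a (y - fst z) u"
      using eq[of "y - fst z" u] u inS by auto
  qed (use oS that inS dser_d1[OF A u] in auto)
  have "((\<lambda>x. deriv (\<lambda>x'. \<psi> (x', snd z + u)) x) has_field_derivative (\<Sum>n. diffs (diffs (cc a u)) n * s^n)) (at (fst z + s))"
  proof (rule shift_deriv[where S=S and c="fst z"])
    show "(fst z + s) \<in> S" using inS s by auto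
  qed (use oS d1 dser_d2[OF A u s] in auto)
  then show ?thesis by (rule DERIV_imp_deriv)
qed

definition b1 :: "(nat\<times>nat \<Rightarrow> real) \<Rightarrow> (nat\<times>nat \<Rightarrow> real)" where
  "b1 a = (\<lambda>(i,j). real ((i+2)*(i+1)) * a (i+2, j))"

lemma quad_le_pow: "(i+2)*(i+1) \<le> 4 * 2^i"
proof (induction i)
  case (Suc i)
  show ?case
  proof (cases i)
    case 0 then show ?thesis by simp
  next
    case (Suc k)
    have "(Suc i + 2) * (Suc i + 1) \<le> 2 * ((i+2)*(i+1))" using Suc by simp
    also have "\<dots> \<le> 2 * (4 * 2^i)" using Suc.IH by simp
    finally show ?thesis by simp
  qed
qed simp

lemma AS_b1:
  assumes A: "AS a \<rho>"
  shows "AS (b1 a) (\<rho>/2)"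
proof -
  let ?G = "\<lambda>(i,j). \<bar>a (i,j)\<bar> * \<rho> ^ i * \<rho> ^ j"
  have r: "\<rho> > 0" and G: "?G summable_on UNIV" using A unfolding AS_def by auto
  define h where "h = (\<lambda>(i::nat,j::nat). (i+2, j))"
  have ih: "inj_on h UNIV" unfolding h_def by (auto simp: inj_on_def)
  have "?G summable_on (h ` UNIV)" by (rule summable_on_subset_banach[OF G]) auto
  then have "(?G \<circ> h) summable_on UNIV" using summable_on_reindex[OF ih] by blast
  then have Gh: "(\<lambda>x. (4/\<rho>^2) * (?G \<circ> h) x) summable_on UNIV" by (rule summable_on_cmult_right)
  have "(\<lambda>x. norm ((\<lambda>(i,j). \<bar>b1 a (i,j)\<bar> * (\<rho>/2) ^ i * (\<rho>/2) ^ j) x)) summable_on UNIV"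
  proof (rule Infinite_Sum.abs_summable_on_comparison_test)
    show "(\<lambda>x. norm ((\<lambda>x. (4/\<rho>^2) * (?G \<circ> h) x) x)) summable_on UNIV"
      using Gh r by (simp add: h_def case_prod_unfold abs_mult)
    fix x :: "nat\<times>nat"
    obtain i j where x: "x = (i,j)" by force
    have q: "real ((i+2)*(i+1)) \<le> 4 * 2^i" using quad_le_pow[of i] by (metis of_nat_le_iff of_nat_mult of_nat_numeral of_nat_power)
    have "real ((i+2)*(i+1)) * (\<rho>/2)^i \<le> 4 * 2^i * (\<rho>/2)^i"
      by (rule mult_right_mono[OF q]) (use r in simp)
    also have "\<dots> = 4/\<rho>^2 * \<rho>^(i+2)" using r by (simp add: power_divide power_add power2_eq_square)
    finally have q2: "real ((i+2)*(i+1)) * (\<rho>/2)^i \<le> 4/\<rho>^2 * \<rho>^(i+2)" .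
    have "(\<rho>/2)^j \<le> \<rho>^j" by (rule power_mono) (use r in auto)
    then have "real ((i+2)*(i+1)) * (\<rho>/2)^i * (\<rho>/2)^j \<le> 4/\<rho>^2 * \<rho>^(i+2) * \<rho>^j"
      by (rule mult_mono[OF q2]) (use r in auto)
    then have "\<bar>a (i+2,j)\<bar> * (real ((i+2)*(i+1)) * (\<rho>/2)^i * (\<rho>/2)^j) \<le> \<bar>a (i+2,j)\<bar> * (4/\<rho>^2 * \<rho>^(i+2) * \<rho>^j)"
      by (rule mult_left_mono) simp
    then show "norm ((\<lambda>(i,j). \<bar>b1 a (i,j)\<bar> * (\<rho>/2) ^ i * (\<rho>/2) ^ j) x) \<le> norm ((4/\<rho>^2) * (?G \<circ> h) x)"
      using r by (simp add: x b1_def h_def abs_mult mult_ac)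
  qed
  then show ?thesis unfolding AS_def using r
    by (simp add: abs_summable_summable)
qed

lemma cc_row_summ:
  assumes A: "AS a \<rho>" and u: "\<bar>u\<bar> \<le> \<rho>"
  shows "(\<lambda>j. a (i,j) * u^j) summable_on UNIV"
proof -
  have r: "\<rho> > 0" using A unfolding AS_def by auto
  have "(\<lambda>j. dterm a \<rho> u (i,j)) summable_on UNIV" by (rule AS_row_summ[OF A]) (use r u in auto)
  then have "(\<lambda>j. inverse (\<rho>^i) * dterm a \<rho> u (i,j)) summable_on UNIV" by (rule summable_on_cmult_right)
  moreover have "(\<lambda>j. inverse (\<rho>^i) * dterm a \<rho> u (i,j)) = (\<lambda>j. a (i,j) * u^j)"
    using r by (auto simp: dterm_def fun_eq_iff)
  ultimately show ?thesis by simp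
qed

lemma dd_cc:
  assumes A: "AS a \<rho>" and u: "\<bar>u\<bar> \<le> \<rho>"
  shows "diffs (diffs (cc a u)) n = cc (b1 a) u n"
proof -
  have "cc (b1 a) u n = (\<Sum>\<^sub>\<infinity>j. real ((n+2)*(n+1)) * (a (n+2,j) * u^j))"
    unfolding cc_def b1_def by (simp add: mult_ac)
  also have "\<dots> = real ((n+2)*(n+1)) * cc a u (n+2)"
    unfolding cc_def by (rule infsum_cmult_right) (use cc_row_summ[OF A u] in auto)
  finally show ?thesis by (simp add: diffs_def algebra_simps)
qed

lemma REP_swap:
  assumes "REP \<psi> z a \<rho>"
  shows "REP (\<lambda>p. \<psi> (snd p, fst p)) (snd z, fst z) (swp a) \<rho>"
  using assms unfolding REP_def AS_swp by (auto simp: dser_swp)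

lemma REP_AS: "REP \<psi> z a \<rho> \<Longrightarrow> AS a \<rho>" unfolding REP_def by auto
lemma REP_pos: "REP \<psi> z a \<rho> \<Longrightarrow> \<rho> > 0" unfolding REP_def AS_def by auto
lemma REP_eq: "REP \<psi> z a \<rho> \<Longrightarrow> \<bar>s\<bar> \<le> \<rho> \<Longrightarrow> \<bar>u\<bar> \<le> \<rho> \<Longrightarrow> \<psi> (fst z + s, snd z + u) = dser a s u"
  unfolding REP_def by auto

lemma REP_lap:
  assumes R: "REP \<psi> z a \<rho>" and s: "\<bar>s\<bar> \<le> \<rho>/2" and u: "\<bar>u\<bar> \<le> \<rho>/2"
  shows "laplacian \<psi> (fst z + s, snd z + u) = dser (b1 a) s u + dser (b1 (swp a)) u s"
proof -
  have r: "\<rho> > 0" using REP_pos[OF R] .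
  have A: "AS a \<rho>" using REP_AS[OF R] .
  have As: "AS (swp a) \<rho>" using A AS_swp by blast
  have "deriv (\<lambda>x. deriv (\<lambda>x'. \<psi> (x', snd z + u)) x) (fst z + s) = (\<Sum>n. diffs (diffs (cc a u)) n * s^n)"
    by (rule REP_d2x[OF R]) (use r s u in auto)
  also have "\<dots> = (\<Sum>n. cc (b1 a) u n * s^n)" using dd_cc[OF A] u r by simp
  also have "\<dots> = dser (b1 a) s u" by (rule dser_eq_suminf[symmetric, OF AS_b1[OF A]]) (use s u in auto)
  finally have 1: "deriv (\<lambda>x. deriv (\<lambda>x'. \<psi> (x', snd z + u)) x) (fst z + s) = dser (b1 a) s u" .
  have "deriv (\<lambda>x. deriv (\<lambda>x'. \<psi> (fst z + s, x')) x) (snd z + u) = (\<Sum>n. diffs (diffs (cc (swp a) s)) n * u^n)"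
    using REP_d2x[OF REP_swap[OF R], of s u] r s u by simp
  also have "\<dots> = (\<Sum>n. cc (b1 (swp a)) s n * u^n)" using dd_cc[OF As] s r by simp
  also have "\<dots> = dser (b1 (swp a)) u s" by (rule dser_eq_suminf[symmetric, OF AS_b1[OF As]]) (use s u in auto)
  finally have 2: "deriv (\<lambda>x. deriv (\<lambda>x'. \<psi> (fst z + s, x')) x) (snd z + u) = dser (b1 (swp a)) u s" .
  show ?thesis unfolding laplacian_def using 1 2 by simp
qed

lemma REP_c0: assumes R: "REP \<psi> z a \<rho>" shows "\<psi> z = a (0,0)"
proof -
  have r: "\<rho> > 0" using REP_pos[OF R] .
  have "\<psi> (fst z + 0, snd z + 0) = dser a 0 0" using REP_eq[OF R, of 0 0] r by simp
  moreover have "\<bar>dser a 0 0 - (\<Sum>p\<in>{p. fst p + snd p < 1}. dterm a 0 0 p)\<bar> \<le> (0/\<rho>)^1 * ASS a \<rho>"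
    by (rule AS_rem[OF REP_AS[OF R]]) (use r in auto)
  ultimately show ?thesis unfolding sum_low1 by simp
qed

lemma REP_rem:
  assumes R: "REP \<psi> z a \<rho>" and su: "\<bar>s\<bar> \<le> m" "\<bar>u\<bar> \<le> m" and m: "m \<le> \<rho>"
  shows "\<bar>\<psi> (fst z + s, snd z + u) - (\<Sum>p\<in>{p. fst p + snd p < k}. dterm a s u p)\<bar> \<le> (m/\<rho>)^k * ASS a \<rho>"
  using AS_rem[OF REP_AS[OF R] su m] REP_eq[OF R] su m by simp

lemma norm_pair_ge: "\<bar>fst w\<bar> \<le> norm w" "\<bar>snd w\<bar> \<le> norm w" for w :: "real \<times> real"
  using norm_fst_le[of "fst w" "snd w"] norm_snd_le[of "snd w" "fst w"] by auto

lemma REP_has_derivative: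
  assumes R: "REP \<psi> z a \<rho>"
  shows "(\<psi> has_derivative (\<lambda>h. a (1,0) * fst h + a (0,1) * snd h)) (at z)"
  unfolding has_derivative_iff_norm
proof
  show "bounded_linear (\<lambda>h. a (1,0) * fst h + a (0,1) * snd h)"
    by (auto intro!: bounded_linear_intros)
  have r: "\<rho> > 0" using REP_pos[OF R] .
  let ?S = "ASS a \<rho>"
  show "((\<lambda>y. norm (\<psi> y - \<psi> z - (a (1,0) * fst (y - z) + a (0,1) * snd (y - z))) / norm (y - z)) \<longlongrightarrow> 0) (at z)"
  proof (rule Lim_null_comparison)
    show "((\<lambda>y. norm (y - z) * ?S / \<rho>^2) \<longlongrightarrow> 0) (at z)"
    proof -
      have "((\<lambda>y. norm (y - z) * ?S / \<rho>^2) \<longlongrightarrow> norm (z - z) * ?S / \<rho>^2) (at z)"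
        by (intro tendsto_intros) (use r in auto)
      then show ?thesis by simp
    qed
    show "\<forall>\<^sub>F y in at z. norm (norm (\<psi> y - \<psi> z - (a (1,0) * fst (y - z) + a (0,1) * snd (y - z))) / norm (y - z)) \<le> norm (y - z) * ?S / \<rho>^2"
      unfolding eventually_at
    proof (intro exI[of _ \<rho>] conjI ballI impI)
      fix y assume y: "y \<in> UNIV" "y \<noteq> z \<and> dist y z < \<rho>"
      define w where "w = y - z"
      have yw: "y = (fst z + fst w, snd z + snd w)" unfolding w_def by simp
      have nw: "norm w > 0" "norm w \<le> \<rho>" using y by (auto simp: w_def dist_norm)
      have "\<bar>\<psi> (fst z + fst w, snd z + snd w) - (\<Sum>p\<in>{p. fst p + snd p < 2}. dterm a (fst w) (snd w) p)\<bar> \<le> (norm w/\<rho>)^2 * ?S"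
        by (rule REP_rem[OF R]) (use nw norm_pair_ge in auto)
      then have "\<bar>\<psi> y - \<psi> z - (a (1,0) * fst w + a (0,1) * snd w)\<bar> \<le> (norm w/\<rho>)^2 * ?S"
        unfolding sum_low2 REP_c0[OF R] yw[symmetric] by (simp add: algebra_simps)
      then have "\<bar>\<psi> y - \<psi> z - (a (1,0) * fst w + a (0,1) * snd w)\<bar> / norm w \<le> (norm w/\<rho>)^2 * ?S / norm w"
        by (rule divide_right_mono) (use nw in auto)
      also have "\<dots> = norm w * ?S / \<rho>^2" using nw by (simp add: power2_eq_square field_simps)
      finally show "norm (norm (\<psi> y - \<psi> z - (a (1,0) * fst (y - z) + a (0,1) * snd (y - z))) / norm (y - z)) \<le> norm (y - z) * ?S / \<rho>^2"
        by (simp add: w_def)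
    qed (use r in auto)
  qed
qed

lemma REP_crit_iff:
  assumes R: "REP \<psi> z a \<rho>"
  shows "critical_point \<psi> z \<longleftrightarrow> a (1,0) = 0 \<and> a (0,1) = 0"
proof
  assume "critical_point \<psi> z"
  then have "(\<lambda>h::real\<times>real. 0::real) = (\<lambda>h. a (1,0) * fst h + a (0,1) * snd h)"
    unfolding critical_point_def using has_derivative_unique REP_has_derivative[OF R] by blast
  then have "(\<lambda>h::real\<times>real. 0::real) (1,0) = (\<lambda>h. a (1,0) * fst h + a (0,1) * snd h) (1,0)"
       and "(\<lambda>h::real\<times>real. 0::real) (0,1) = (\<lambda>h. a (1,0) * fst h + a (0,1) * snd h) (0,1)"
    by metis+
  then show "a (1,0) = 0 \<and> a (0,1) = 0" by simp
next
  assume "a (1,0) = 0 \<and> a (0,1) = 0"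
  then show "critical_point \<psi> z" using REP_has_derivative[OF R] unfolding critical_point_def by simp
qed

lemma REP_isCont: "REP \<psi> z a \<rho> \<Longrightarrow> isCont \<psi> z"
  using REP_has_derivative has_derivative_continuous by blast

lemma REP_lap_bound:
  assumes R: "REP \<psi> z a \<rho>" and su: "\<bar>s\<bar> \<le> m" "\<bar>u\<bar> \<le> m" and m: "m \<le> \<rho>/2"
  shows "\<bar>laplacian \<psi> (fst z + s, snd z + u) - 2*(a (2,0) + a (0,2))\<bar>
           \<le> (m/(\<rho>/2)) * (ASS (b1 a) (\<rho>/2) + ASS (b1 (swp a)) (\<rho>/2))"
proof -
  have A: "AS a \<rho>" using REP_AS[OF R] .
  have As: "AS (swp a) \<rho>" using A AS_swp by blast
  have 1: "\<bar>dser (b1 a) s u - b1 a (0,0)\<bar> \<le> (m/(\<rho>/2)) * ASS (b1 a) (\<rho>/2)"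
    using AS_rem[OF AS_b1[OF A] su m, of 1] unfolding sum_low1 by simp
  have 2: "\<bar>dser (b1 (swp a)) u s - b1 (swp a) (0,0)\<bar> \<le> (m/(\<rho>/2)) * ASS (b1 (swp a)) (\<rho>/2)"
    using AS_rem[OF AS_b1[OF As] su(2,1) m, of 1] unfolding sum_low1 by simp
  have e: "b1 a (0,0) = 2 * a (2,0)" "b1 (swp a) (0,0) = 2 * a (0,2)"
    by (simp_all add: b1_def swp_def numeral_2_eq_2)
  have "laplacian \<psi> (fst z + s, snd z + u) = dser (b1 a) s u + dser (b1 (swp a)) u s"
    by (rule REP_lap[OF R]) (use su m in auto)
  then show ?thesis using 1 2 e by (simp add: abs_le_iff algebra_simps) linarith?
qed

lemma Q_tangent:
  assumes R: "REP \<psi> y a \<rho>" and c: "a (0,0) = 0" "a (1,0) = 0" "a (0,1) = 0"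
    and g1: "(\<gamma>1 has_field_derivative \<tau>1) (at t0)" and g2: "(\<gamma>2 has_field_derivative \<tau>2) (at t0)"
    and y: "\<gamma>1 t0 = fst y" "\<gamma>2 t0 = snd y"
    and zero: "\<And>t. \<psi> (\<gamma>1 t, \<gamma>2 t) = 0"
  shows "a (2,0) * \<tau>1^2 + a (1,1) * \<tau>1 * \<tau>2 + a (0,2) * \<tau>2^2 = 0"
proof -
  define Q where "Q = (\<lambda>s u. a (2,0) * s^2 + a (1,1) * s * u + a (0,2) * u^2)"
  have r: "\<rho> > 0" using REP_pos[OF R] .
  let ?S = "ASS a \<rho>"
  define D1 where "D1 = (\<lambda>t. (\<gamma>1 t - \<gamma>1 t0) / (t - t0))"
  define D2 where "D2 = (\<lambda>t. (\<gamma>2 t - \<gamma>2 t0) / (t - t0))"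
  have D1: "(D1 \<longlongrightarrow> \<tau>1) (at t0)" using g1 unfolding has_field_derivative_iff D1_def .
  have D2: "(D2 \<longlongrightarrow> \<tau>2) (at t0)" using g2 unfolding has_field_derivative_iff D2_def .
  define m where "m = (\<lambda>t. \<bar>\<gamma>1 t - \<gamma>1 t0\<bar> + \<bar>\<gamma>2 t - \<gamma>2 t0\<bar>)"
  have "(m \<longlongrightarrow> \<bar>\<gamma>1 t0 - \<gamma>1 t0\<bar> + \<bar>\<gamma>2 t0 - \<gamma>2 t0\<bar>) (at t0)"
    unfolding m_def
    using DERIV_isCont[OF g1] DERIV_isCont[OF g2]
    by (intro tendsto_intros) (auto simp: isCont_def)
  then have "(m \<longlongrightarrow> 0) (at t0)" by simp
  then have evm: "\<forall>\<^sub>F t in at t0. m t < \<rho>" using r by (rule order_tendstoD)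
  have ev: "\<forall>\<^sub>F t in at t0. \<bar>Q (D1 t) (D2 t)\<bar> \<le> \<bar>t - t0\<bar> * (\<bar>D1 t\<bar> + \<bar>D2 t\<bar>)^3 * ?S / \<rho>^3"
    using evm eventually_at_in_open[of UNIV t0, OF open_UNIV UNIV_I]
  proof (eventually_elim)
    case (elim t)
    note mt = elim(1)
    have tn: "t \<noteq> t0" using elim(2) by auto
    define s u where "s = \<gamma>1 t - \<gamma>1 t0" and "u = \<gamma>2 t - \<gamma>2 t0"
    have "\<bar>\<psi> (fst y + s, snd y + u) - (\<Sum>p\<in>{p. fst p + snd p < 3}. dterm a s u p)\<bar> \<le> (m t/\<rho>)^3 * ?S"
      by (rule REP_rem[OF R]) (use mt in \<open>auto simp: m_def s_def u_def\<close>)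
    moreover have "\<psi> (fst y + s, snd y + u) = 0" using zero[of t] y by (simp add: s_def u_def)
    ultimately have 1: "\<bar>Q s u\<bar> \<le> (m t/\<rho>)^3 * ?S" unfolding sum_low3 Q_def using c by (simp add: algebra_simps)
    have sD: "s = (t - t0) * D1 t" "u = (t - t0) * D2 t" using tn by (simp_all add: D1_def D2_def s_def u_def)
    have "Q s u = (t - t0)^2 * Q (D1 t) (D2 t)" unfolding Q_def sD by (simp add: algebra_simps power2_eq_square)
    moreover have "m t = \<bar>t - t0\<bar> * (\<bar>D1 t\<bar> + \<bar>D2 t\<bar>)"
    proof -
      have "m t = \<bar>s\<bar> + \<bar>u\<bar>" by (simp add: m_def s_def u_def)
      also have "\<dots> = \<bar>t - t0\<bar> * (\<bar>D1 t\<bar> + \<bar>D2 t\<bar>)" unfolding sD abs_mult by (simp add: distrib_left)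
      finally show ?thesis .
    qed
    ultimately have "(t - t0)^2 * \<bar>Q (D1 t) (D2 t)\<bar> \<le> (\<bar>t - t0\<bar> * (\<bar>D1 t\<bar> + \<bar>D2 t\<bar>) / \<rho>)^3 * ?S"
      using 1 by (simp add: abs_mult)
    also have "\<dots> = (t - t0)^2 * (\<bar>t - t0\<bar> * (\<bar>D1 t\<bar> + \<bar>D2 t\<bar>)^3 * ?S / \<rho>^3)"
      by (simp add: power_divide power_mult_distrib power2_eq_square power3_eq_cube)
    finally have fin: "(t - t0)^2 * \<bar>Q (D1 t) (D2 t)\<bar> \<le> (t - t0)^2 * (\<bar>t - t0\<bar> * (\<bar>D1 t\<bar> + \<bar>D2 t\<bar>)^3 * ?S / \<rho>^3)" .
    have pos: "(t - t0)^2 > 0" using tn by simp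
    show ?case using fin unfolding mult_le_cancel_left_pos[OF pos] .
  qed
  have "((\<lambda>t. \<bar>t - t0\<bar> * (\<bar>D1 t\<bar> + \<bar>D2 t\<bar>)^3 * ?S / \<rho>^3) \<longlongrightarrow> \<bar>t0 - t0\<bar> * (\<bar>\<tau>1\<bar> + \<bar>\<tau>2\<bar>)^3 * ?S / \<rho>^3) (at t0)"
    by (intro tendsto_intros D1 D2) (use r in auto)
  then have L0: "((\<lambda>t. \<bar>t - t0\<bar> * (\<bar>D1 t\<bar> + \<bar>D2 t\<bar>)^3 * ?S / \<rho>^3) \<longlongrightarrow> 0) (at t0)" by simp
  have LQ: "((\<lambda>t. \<bar>Q (D1 t) (D2 t)\<bar>) \<longlongrightarrow> \<bar>Q \<tau>1 \<tau>2\<bar>) (at t0)"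
    unfolding Q_def by (intro tendsto_intros D1 D2)
  have "\<bar>Q \<tau>1 \<tau>2\<bar> \<le> 0"
    by (rule tendsto_le[OF _ L0 LQ ev]) simp
  then show ?thesis unfolding Q_def by simp
qed

lemma small_pos:
  assumes "\<forall>\<^sub>F t in at_right (0::real). P t"
  shows "\<exists>t>0. P t"
proof -
  have "\<forall>\<^sub>F t in at_right (0::real). 0 < t \<and> P t"
    using eventually_conj[OF eventually_at_right_less assms] .
  then show ?thesis using eventually_happens'[of "at_right (0::real)"] by auto
qed

lemma ev_lin:
  assumes "c > 0"
  shows "\<forall>\<^sub>F t in at_right (0::real). t * K < c"
proof -
  have "((\<lambda>t. t * K) \<longlongrightarrow> 0 * K) (at_right (0::real))"
    by (intro tendsto_intros)
  then show ?thesis using assms by (auto dest: order_tendstoD(2))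
qed

lemma Q_perp:
  fixes A B C v1 v2 t1 t2 :: real
  assumes w: "v1 * t1 + v2 * t2 = 0" and tr: "A + C = 1/2"
    and qt: "A * t1^2 + B * t1 * t2 + C * t2^2 = 0"
    and tn: "t1 \<noteq> 0 \<or> t2 \<noteq> 0" and vn: "v1 \<noteq> 0 \<or> v2 \<noteq> 0"
  shows "A * v1^2 + B * v1 * v2 + C * v2^2 > 0"
proof -
  define Q where "Q = (\<lambda>s u. A * s^2 + B * s * u + C * u^2)"
  define ww where "ww = v1 * t1 + v2 * t2"
  define c where "c = v1 * t2 - v2 * t1"
  define T where "T = t1^2 + t2^2"
  have T: "T > 0" using tn unfolding T_def by (auto simp: add_pos_nonneg add_nonneg_pos)
  have h1: "T^2 * Q v1 v2 = Q (ww * t1 + c * t2) (ww * t2 - c * t1)"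
    unfolding Q_def ww_def c_def T_def by algebra
  have h2: "Q (c * t2) (- (c * t1)) = c^2 * ((A + C) * T - Q t1 t2)"
    unfolding Q_def T_def by algebra
  have h3: "(v1^2 + v2^2) * T = ww^2 + c^2" unfolding ww_def c_def T_def by algebra
  have ww0: "ww = 0" using w ww_def by simp
  have V: "v1^2 + v2^2 > 0" using vn by (auto simp: add_pos_nonneg add_nonneg_pos)
  have c2: "c^2 > 0" using h3 ww0 V T by (metis mult_pos_pos power2_eq_square add_0 mult_zero_left)
  have "T^2 * Q v1 v2 = c^2 * T / 2" using h1 h2 ww0 tr qt unfolding Q_def by simp
  moreover have "c^2 * T / 2 > 0" using c2 T by simp
  ultimately have "T^2 * Q v1 v2 > 0" by linarith
  then have "Q v1 v2 > 0" using T by (simp add: zero_less_mult_iff)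
  then show ?thesis unfolding Q_def .
qed

lemma abs_contra: "\<bar>L - K\<bar> < \<bar>K - 1\<bar> / 2 \<Longrightarrow> L = G \<Longrightarrow> \<bar>G - 1\<bar> < \<bar>K - 1\<bar> / 2 \<Longrightarrow> False"
  for L K G :: real by (simp add: abs_if split: if_splits)

lemma boundary_pos:
  fixes \<Omega> :: "(real\<times>real) set" and \<psi> :: "real\<times>real \<Rightarrow> real" and F :: "real \<Rightarrow> real"
  assumes oO: "open \<Omega>" and xO: "x \<in> \<Omega>" and yF: "y \<in> frontier \<Omega>"
    and near: "\<And>w. w \<in> frontier \<Omega> \<Longrightarrow> dist x y \<le> dist x w"
    and R: "REP \<psi> y a \<rho>" and crit: "critical_point \<psi> y" and y0: "\<psi> y = 0"
    and g1: "(\<gamma>1 has_field_derivative \<tau>1) (at t0)" and g2: "(\<gamma>2 has_field_derivative \<tau>2) (at t0)"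
    and tn: "\<tau>1 \<noteq> 0 \<or> \<tau>2 \<noteq> 0" and gy: "\<gamma>1 t0 = fst y" "\<gamma>2 t0 = snd y"
    and onF: "\<And>t. (\<gamma>1 t, \<gamma>2 t) \<in> frontier \<Omega>"
    and zF: "\<And>w. w \<in> frontier \<Omega> \<Longrightarrow> \<psi> w = 0"
    and lap: "\<And>p. p \<in> \<Omega> \<Longrightarrow> laplacian \<psi> p = F (\<psi> p)"
    and Fc: "isCont F 0" and F0: "F 0 = 1"
  shows "\<exists>p\<in>\<Omega>. \<psi> p > 0"
proof -
  have r: "\<rho> > 0" using REP_pos[OF R] .
  have a0: "a (0,0) = 0" using REP_c0[OF R] y0 by simp
  have a1: "a (1,0) = 0" "a (0,1) = 0" using REP_crit_iff[OF R] crit by auto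
  have qt: "a (2,0) * \<tau>1^2 + a (1,1) * \<tau>1 * \<tau>2 + a (0,2) * \<tau>2^2 = 0"
    by (rule Q_tangent[OF R a0 a1 g1 g2 gy]) (use zF onF in blast)
  define v1 where "v1 = fst x - fst y"
  define v2 where "v2 = snd x - snd y"
  define f where "f = (\<lambda>t. (\<gamma>1 t - fst x)^2 + (\<gamma>2 t - snd x)^2)"
  have df: "(f has_field_derivative (2 * (\<gamma>1 t0 - fst x) * \<tau>1 + 2 * (\<gamma>2 t0 - snd x) * \<tau>2)) (at t0)"
    unfolding f_def by (auto intro!: derivative_eq_intros g1 g2 simp: algebra_simps)
  have fdist: "f t = (dist x (\<gamma>1 t, \<gamma>2 t))^2" for t
  proof -
    obtain x1 x2 where x: "x = (x1,x2)" by force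
    have "(dist x (\<gamma>1 t, \<gamma>2 t))^2 = (dist x1 (\<gamma>1 t))^2 + (dist x2 (\<gamma>2 t))^2"
      unfolding x dist_Pair_Pair by simp
    then show ?thesis by (simp add: f_def x dist_real_def power2_commute)
  qed
  have yeq: "y = (\<gamma>1 t0, \<gamma>2 t0)" using gy by (simp add: prod_eq_iff)
  have fmin: "f t0 \<le> f t" for t
  proof -
    have "dist x y \<le> dist x (\<gamma>1 t, \<gamma>2 t)" by (rule near[OF onF])
    then have "(dist x y)^2 \<le> (dist x (\<gamma>1 t, \<gamma>2 t))^2" by (intro power_mono) auto
    then show ?thesis using fdist yeq by metis
  qed
  have "2 * (\<gamma>1 t0 - fst x) * \<tau>1 + 2 * (\<gamma>2 t0 - snd x) * \<tau>2 = 0"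
    by (rule DERIV_local_min[OF df, of 1]) (use fmin in auto)
  then have orth: "v1 * \<tau>1 + v2 * \<tau>2 = 0" using gy unfolding v1_def v2_def by (simp add: algebra_simps)
  have yO: "y \<notin> \<Omega>" using yF oO by (simp add: frontier_def interior_open)
  have dpos: "dist x y > 0" using xO yO by auto
  have ballO: "ball x (dist x y) \<subseteq> \<Omega>"
  proof (rule ccontr)
    assume "\<not> ball x (dist x y) \<subseteq> \<Omega>"
    then have "ball x (dist x y) - \<Omega> \<noteq> {}" by auto
    moreover have "x \<in> ball x (dist x y) \<inter> \<Omega>" using xO dpos by auto
    then have "ball x (dist x y) \<inter> \<Omega> \<noteq> {}" by blast
    ultimately have "ball x (dist x y) \<inter> frontier \<Omega> \<noteq> {}"
      using connected_Int_frontier[OF connected_ball] by blast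
    then obtain w where "w \<in> frontier \<Omega>" "dist x w < dist x y" by auto
    then show False using near by fastforce
  qed
  have vn: "v1 \<noteq> 0 \<or> v2 \<noteq> 0" using dpos unfolding v1_def v2_def by (auto simp: prod_eq_iff)
  define P where "P = (\<lambda>t. y + t *\<^sub>R (x - y))"
  have Pc: "P t = (fst y + t * v1, snd y + t * v2)" for t by (simp add: P_def v1_def v2_def prod_eq_iff)
  have PO: "P t \<in> \<Omega>" if "0 < t" "t < 1" for t
  proof -
    have "x - P t = (1 - t) *\<^sub>R (x - y)" by (simp add: P_def algebra_simps)
    then have "dist x (P t) = (1 - t) * dist x y" using that by (simp add: dist_norm)
    also have "\<dots> < 1 * dist x y" by (rule mult_strict_right_mono) (use that dpos in auto)
    finally show ?thesis using ballO by auto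
  qed
  define V where "V = \<bar>v1\<bar> + \<bar>v2\<bar>"
  have Vp: "V > 0" using vn by (auto simp: V_def add_pos_nonneg add_nonneg_pos)
  let ?S1 = "ASS a \<rho>"
  let ?S2 = "ASS (b1 a) (\<rho>/2) + ASS (b1 (swp a)) (\<rho>/2)"
  have S1: "?S1 \<ge> 0" using ASS_nonneg r by simp
  have S2: "?S2 \<ge> 0" using ASS_nonneg r by (simp add: add_nonneg_nonneg)
  have su: "\<bar>t * v1\<bar> \<le> t * V" "\<bar>t * v2\<bar> \<le> t * V" if "t > 0" for t
    using that by (auto simp: V_def abs_mult)
  have tr: "a (2,0) + a (0,2) = 1/2"
  proof (rule ccontr)
    assume ne: "a (2,0) + a (0,2) \<noteq> 1/2"
    define d where "d = \<bar>2 * (a (2,0) + a (0,2)) - 1\<bar>"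
    have dp: "d > 0" using ne by (simp add: d_def)
    obtain \<delta> where \<delta>: "\<delta> > 0" "\<And>w. dist w 0 < \<delta> \<Longrightarrow> dist (F w) (F 0) < d/2"
      using Fc dp unfolding continuous_at_eps_delta by (meson half_gt_zero)
    have "\<forall>\<^sub>F t in at_right (0::real). t * V < \<rho>/2 \<and> t * (V * ?S1 / \<rho>) < \<delta> \<and> t * (V * ?S2 * 2 / \<rho>) < d/2 \<and> t * 1 < 1"
      by (intro eventually_conj ev_lin) (use r \<delta> dp in auto)
    then obtain t where t: "t > 0" "t * V < \<rho>/2" "t * (V * ?S1 / \<rho>) < \<delta>" "t * (V * ?S2 * 2 / \<rho>) < d/2" "t * 1 < 1"
      using small_pos by blast
    have mV: "t * V \<le> \<rho>" "t * V \<le> \<rho>/2" using t(2) r by linarith+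
    have 1: "\<bar>\<psi> (P t) - a (0,0)\<bar> \<le> (t * V/\<rho>)^1 * ?S1"
      using REP_rem[OF R su[OF t(1)] mV(1), of 1] unfolding Pc sum_low1 by simp
    have "(t * V/\<rho>)^1 * ?S1 = t * (V * ?S1 / \<rho>)" by simp
    then have p1: "\<bar>\<psi> (P t)\<bar> < \<delta>" using 1 a0 t(3) by simp
    have 2: "\<bar>laplacian \<psi> (P t) - 2*(a (2,0) + a (0,2))\<bar> \<le> (t * V/(\<rho>/2)) * ?S2"
      using REP_lap_bound[OF R su[OF t(1)] mV(2)] unfolding Pc by simp
    have "(t * V/(\<rho>/2)) * ?S2 = t * (V * ?S2 * 2 / \<rho>)" by simp
    then have p2: "\<bar>laplacian \<psi> (P t) - 2*(a (2,0) + a (0,2))\<bar> < d/2" using 2 t(4) by simp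
    have 3: "laplacian \<psi> (P t) = F (\<psi> (P t))" using lap PO t by auto
    have 4: "\<bar>F (\<psi> (P t)) - 1\<bar> < d/2" using \<delta>(2)[of "\<psi> (P t)"] F0 p1 by (simp add: dist_real_def)
    show False using abs_contra[OF p2[unfolded d_def] 3 4[unfolded d_def]] .
  qed
  define q where "q = a (2,0) * v1^2 + a (1,1) * v1 * v2 + a (0,2) * v2^2"
  have qp: "q > 0" unfolding q_def by (rule Q_perp[OF orth tr qt tn vn])
  have "\<forall>\<^sub>F t in at_right (0::real). t * V < \<rho> \<and> t * (V^3 * ?S1 / \<rho>^3) < q \<and> t * 1 < 1"
    by (intro eventually_conj ev_lin) (use r qp in auto)
  then obtain t where t: "t > 0" "t * V < \<rho>" "t * (V^3 * ?S1 / \<rho>^3) < q" "t * 1 < 1"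
    using small_pos by blast
  have 1: "\<bar>\<psi> (P t) - (\<Sum>p\<in>{p. fst p + snd p < 3}. dterm a (t * v1) (t * v2) p)\<bar> \<le> (t * V/\<rho>)^3 * ?S1"
    using REP_rem[OF R su[OF t(1)] less_imp_le[OF t(2)], of 3] unfolding Pc by simp
  have "(\<Sum>p\<in>{p. fst p + snd p < 3}. dterm a (t * v1) (t * v2) p) = t^2 * q"
    unfolding sum_low3 q_def using a0 a1 by (simp add: algebra_simps power2_eq_square)
  moreover have "(t * V/\<rho>)^3 * ?S1 = t^2 * (t * (V^3 * ?S1 / \<rho>^3))"
    by (simp add: power_divide power_mult_distrib power2_eq_square power3_eq_cube)
  moreover have "t^2 * (t * (V^3 * ?S1 / \<rho>^3)) < t^2 * q"
    by (rule mult_strict_left_mono) (use t in auto)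
  ultimately have "\<psi> (P t) > 0" using 1 by linarith
  then show ?thesis using PO t by auto
qed

lemma powser_holo:
  fixes c :: "nat \<Rightarrow> complex"
  assumes "\<And>z. norm z < R \<Longrightarrow> summable (\<lambda>n. c n * z^n)"
  shows "(\<lambda>z. \<Sum>n. c n * z^n) holomorphic_on ball 0 R"
    and "norm z < R \<Longrightarrow> deriv (\<lambda>z. \<Sum>n. c n * z^n) z = (\<Sum>n. diffs c n * z^n)"
proof -
  have d: "((\<lambda>z. \<Sum>n. c n * z^n) has_field_derivative (\<Sum>n. diffs c n * z^n)) (at z)" if "norm z < R" for z
    by (rule termdiffs_strong'[where K=R]) (use assms that in auto)
  show "(\<lambda>z. \<Sum>n. c n * z^n) holomorphic_on ball 0 R"
    unfolding holomorphic_on_open[OF open_ball]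
  proof
    fix x :: complex assume "x \<in> ball 0 R"
    then have "norm x < R" by simp
    then show "\<exists>f'. ((\<lambda>z. \<Sum>n. c n * z^n) has_field_derivative f') (at x)" using d by blast
  qed
  show "norm z < R \<Longrightarrow> deriv (\<lambda>z. \<Sum>n. c n * z^n) z = (\<Sum>n. diffs c n * z^n)"
    using d DERIV_imp_deriv by blast
qed

lemma cnj_powser:
  fixes \<alpha> :: "nat \<Rightarrow> real"
  assumes "summable (\<lambda>n. of_real (\<alpha> n) * z^n)"
  shows "(\<Sum>n. of_real (\<alpha> n) * cnj z ^ n) = cnj (\<Sum>n. of_real (\<alpha> n) * z^n)"
proof -
  have "(\<lambda>n. of_real (\<alpha> n) * z^n) sums (\<Sum>n. of_real (\<alpha> n) * z^n)" using assms by (rule summable_sums)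
  then have "(\<lambda>n. cnj (of_real (\<alpha> n) * z^n)) sums cnj (\<Sum>n. of_real (\<alpha> n) * z^n)"
    by (rule sums_cnj[THEN iffD2])
  moreover have "(\<lambda>n. cnj (of_real (\<alpha> n) * z^n)) = (\<lambda>n. of_real (\<alpha> n) * cnj z ^ n)"
    by (simp add: fun_eq_iff)
  ultimately have "(\<lambda>n. of_real (\<alpha> n) * cnj z ^ n) sums cnj (\<Sum>n. of_real (\<alpha> n) * z^n)" by simp
  then show ?thesis by (rule sums_unique[symmetric])
qed

lemma real_powser:
  fixes \<alpha> :: "nat \<Rightarrow> real"
  assumes "summable (\<lambda>n. of_real (\<alpha> n) * (of_real t :: complex)^n)"
  shows "(\<Sum>n. of_real (\<alpha> n) * (of_real t :: complex)^n) = of_real (\<Sum>n. \<alpha> n * t^n)"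
proof -
  have e: "(\<lambda>n. of_real (\<alpha> n) * (of_real t :: complex)^n) = (\<lambda>n. of_real (\<alpha> n * t^n))" by simp
  have "summable (\<lambda>n. \<alpha> n * t^n)" using assms unfolding e summable_of_real_iff .
  then show ?thesis unfolding e by (rule suminf_of_real[symmetric])
qed

lemma Re_mult_ofr: "Re (c * complex_of_real r) = Re c * r" by simp

lemma analytic_inverse_compose:
  fixes \<alpha> \<beta> :: "nat \<Rightarrow> real" and F :: "real \<Rightarrow> real"
  assumes Rpos: "R > 0" and dl: "\<delta> > 0"
    and sa: "\<And>z::complex. norm z < R \<Longrightarrow> summable (\<lambda>n. of_real (\<alpha> n) * z^n)"
    and sb: "\<And>z::complex. norm z < R \<Longrightarrow> summable (\<lambda>n. of_real (\<beta> n) * z^n)"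
    and a0: "\<alpha> 0 = 0" and a1: "\<alpha> 1 \<noteq> 0"
    and eq: "\<And>t. \<bar>t\<bar> < \<delta> \<Longrightarrow> F (\<Sum>n. \<alpha> n * t^n) = (\<Sum>n. \<beta> n * t^n)"
  shows "real_analytic_at1 F 0"
proof -
  define G where "G = (\<lambda>z::complex. \<Sum>n. of_real (\<alpha> n) * z^n)"
  define H where "H = (\<lambda>z::complex. \<Sum>n. of_real (\<beta> n) * z^n)"
  have hG: "G holomorphic_on ball 0 R" unfolding G_def by (rule powser_holo(1)[OF sa])
  have hH: "H holomorphic_on ball 0 R" unfolding H_def by (rule powser_holo(1)[OF sb])
  have "deriv G 0 = (\<Sum>n. diffs (\<lambda>n. of_real (\<alpha> n)) n * 0^n)"
    unfolding G_def using Rpos by (intro powser_holo(2)[OF sa]) auto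
  also have "\<dots> = diffs (\<lambda>n. of_real (\<alpha> n)) 0" by (rule powser_zero)
  finally have dG: "deriv G 0 = of_real (\<alpha> 1)" by (simp add: diffs_def)
  have G0: "G 0 = 0" unfolding G_def using a0 by simp
  define S where "S = ball (0::complex) (min R \<delta>)"
  have SR: "S \<subseteq> ball 0 R" unfolding S_def by auto
  obtain r0 where r0: "r0 > 0" "ball 0 r0 \<subseteq> S" "open (G ` ball 0 r0)" "inj_on G (ball 0 r0)"
    using has_complex_derivative_locally_invertible[of G S 0] hG SR dG a1 Rpos dl
    by (auto simp: S_def intro: holomorphic_on_subset)
  define B where "B = ball (0::complex) r0"
  have BR: "B \<subseteq> ball 0 R" and Bd: "\<And>z. z \<in> B \<Longrightarrow> norm z < \<delta>"
    using r0(2) unfolding B_def S_def by auto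
  obtain g where g: "g holomorphic_on (G ` B)" "\<And>z. z \<in> B \<Longrightarrow> g (G z) = z"
    using holomorphic_has_inverse[of G B] hG BR r0 unfolding B_def
    by (metis holomorphic_on_subset open_ball)
  have gB: "g ` (G ` B) \<subseteq> ball 0 R" using g(2) BR by auto
  have hK: "(H \<circ> g) holomorphic_on (G ` B)"
    by (rule holomorphic_on_compose_gen[OF g(1) hH gB])
  have "0 \<in> G ` B" using G0 r0(1) unfolding B_def by force
  then obtain \<epsilon> where \<epsilon>: "\<epsilon> > 0" "ball 0 \<epsilon> \<subseteq> G ` B"
    using r0(3) unfolding B_def by (meson openE)
  have hKe: "(H \<circ> g) holomorphic_on ball 0 \<epsilon>" using hK \<epsilon>(2) by (rule holomorphic_on_subset)
  define c where "c = (\<lambda>n. Re ((deriv ^^ n) (H \<circ> g) 0 / fact n))"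
  show ?thesis unfolding real_analytic_at1_def
  proof (intro exI[of _ \<epsilon>] conjI allI impI exI[of _ c])
    show "\<epsilon> > 0" by fact
    fix x :: real assume x: "\<bar>x - 0\<bar> < \<epsilon>"
    define w where "w = (of_real x :: complex)"
    have wb: "w \<in> ball 0 \<epsilon>" using x by (simp add: w_def)
    then obtain z where z: "z \<in> B" "G z = w" using \<epsilon>(2) by blast
    have cz: "cnj z \<in> B" using z(1) unfolding B_def by simp
    have "G (cnj z) = cnj (G z)" unfolding G_def
      by (rule cnj_powser[OF sa]) (use z(1) BR in auto)
    also have "\<dots> = w" using z(2) by (simp add: w_def)
    finally have "G (cnj z) = G z" using z(2) by simp
    then have "cnj z = z" using r0(4) cz z(1) unfolding B_def inj_on_def by blast
    then have zr: "z = of_real (Re z)" by (metis Reals_cnj_iff complex_is_Real_iff of_real_Re)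
    define t where "t = Re z"
    have "norm z < R" using BR z(1) by auto
    then have tn1: "norm (of_real t :: complex) < R" unfolding t_def by (metis zr)
    have tn2: "\<bar>t\<bar> < \<delta>" using abs_Re_le_cmod[of z] Bd[OF z(1)] unfolding t_def by linarith
    note tn = tn1 tn2
    have "G (of_real t) = of_real (\<Sum>n. \<alpha> n * t^n)" unfolding G_def by (rule real_powser[OF sa[OF tn(1)]])
    then have xt: "x = (\<Sum>n. \<alpha> n * t^n)" using z(2) zr unfolding t_def w_def by simp
    have "H (of_real t) = of_real (\<Sum>n. \<beta> n * t^n)" unfolding H_def by (rule real_powser[OF sb[OF tn(1)]])
    moreover have "(H \<circ> g) w = H (of_real t)" using g(2)[OF z(1)] z(2) zr unfolding t_def by simp
    ultimately have Fx: "F x = Re ((H \<circ> g) w)" using eq[OF tn(2)] xt by simp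
    have "(\<lambda>n. (deriv ^^ n) (H \<circ> g) 0 / fact n * (w - 0)^n) sums (H \<circ> g) w"
      by (rule holomorphic_power_series[OF hKe wb])
    then have "(\<lambda>n. Re ((deriv ^^ n) (H \<circ> g) 0 / fact n * (w - 0)^n)) sums Re ((H \<circ> g) w)"
      by (rule sums_Re)
    moreover have "Re ((deriv ^^ n) (H \<circ> g) 0 / fact n * (w - 0)^n) = c n * (x - 0)^n" for n
    proof -
      have "(deriv ^^ n) (H \<circ> g) 0 / fact n * (w - 0)^n = ((deriv ^^ n) (H \<circ> g) 0 / fact n) * of_real (x^n)"
        by (simp add: w_def)
      then show ?thesis unfolding c_def by (simp only: Re_mult_ofr) simp
    qed
    ultimately show "(\<lambda>n. c n * (x - 0)^n) sums F x" using Fx by simp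
  qed
qed

lemma cc0: "cc b 0 n = b (n,0)"
proof -
  have "cc b 0 n = infsum (\<lambda>j. b (n,j) * 0^j) {0}"
    unfolding cc_def by (rule infsum_cong_neutral) auto
  then show ?thesis by simp
qed

lemma dser_t0:
  assumes "AS b \<rho>" "\<bar>t\<bar> \<le> \<rho>"
  shows "(\<lambda>n. b (n,0) * t^n) sums dser b t 0"
  using AS_row[OF assms(1,2), of 0] assms unfolding cc0 AS_def by simp

lemma AS_abs_coef: "AS b \<rho> \<Longrightarrow> AS (\<lambda>p. \<bar>b p\<bar>) \<rho>"
  unfolding AS_def by (simp add: case_prod_unfold)

lemma AS_col_summable:
  assumes "AS b \<rho>"
  shows "summable (\<lambda>n. \<bar>b (n,0)\<bar> * \<rho>^n)"
proof -
  have r: "\<rho> > 0" using assms unfolding AS_def by auto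
  show ?thesis using dser_t0[OF AS_abs_coef[OF assms], of \<rho>] r by (simp add: sums_summable)
qed

lemma AS_col_complex:
  assumes "AS b \<rho>" "norm (z::complex) < \<rho>"
  shows "summable (\<lambda>n. of_real (b (n,0)) * z^n)"
proof (rule summable_comparison_test'[OF AS_col_summable[OF assms(1)]])
  fix n
  have "norm z ^ n \<le> \<rho>^n" by (rule power_mono) (use assms in auto)
  then show "norm (of_real (b (n,0)) * z^n) \<le> \<bar>b (n,0)\<bar> * \<rho>^n"
    by (simp add: norm_mult norm_power mult_left_mono)
qed

lemma regular_zero_analytic:
  fixes \<Omega> :: "(real\<times>real) set" and \<psi> :: "real\<times>real \<Rightarrow> real" and F :: "real \<Rightarrow> real"
  assumes R: "REP \<psi> q a \<rho>" and a10: "a (1,0) \<noteq> 0" and q0: "\<psi> q = 0"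
    and oO: "open \<Omega>" and qO: "q \<in> \<Omega>"
    and lap: "\<And>p. p \<in> \<Omega> \<Longrightarrow> laplacian \<psi> p = F (\<psi> p)"
  shows "real_analytic_at1 F 0"
proof -
  have r: "\<rho> > 0" using REP_pos[OF R] .
  have A: "AS a \<rho>" using REP_AS[OF R] .
  have A1: "AS (b1 a) (\<rho>/2)" using AS_b1[OF A] .
  have A2: "AS (swp (b1 (swp a))) (\<rho>/2)" using AS_b1[of "swp a" \<rho>] A AS_swp by blast
  define \<alpha> where "\<alpha> = (\<lambda>n. a (n,0))"
  define \<beta> where "\<beta> = (\<lambda>n. b1 a (n,0) + swp (b1 (swp a)) (n,0))"
  obtain e where e: "e > 0" "ball q e \<subseteq> \<Omega>" using oO qO openE by blast
  define \<delta> where "\<delta> = min e (\<rho>/2)"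
  have dl: "\<delta> > 0" using e r by (simp add: \<delta>_def)
  have sa: "summable (\<lambda>n. of_real (\<alpha> n) * z^n)" if "norm (z::complex) < \<rho>/2" for z
  proof -
    have "norm z < \<rho>" using that norm_ge_zero[of z] by linarith
    then show ?thesis unfolding \<alpha>_def by (rule AS_col_complex[OF A])
  qed
  have sb: "summable (\<lambda>n. of_real (\<beta> n) * z^n)" if "norm (z::complex) < \<rho>/2" for z
  proof -
    have "summable (\<lambda>n. of_real (b1 a (n,0)) * z^n + of_real (swp (b1 (swp a)) (n,0)) * z^n)"
      by (intro summable_add AS_col_complex[OF A1] AS_col_complex[OF A2] that)
    then show ?thesis unfolding \<beta>_def by (simp add: distrib_right)
  qed
  have eq: "F (\<Sum>n. \<alpha> n * t^n) = (\<Sum>n. \<beta> n * t^n)" if t: "\<bar>t\<bar> < \<delta>" for t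
  proof -
    have t2: "\<bar>t\<bar> \<le> \<rho>/2" "\<bar>t\<bar> < e" using t by (auto simp: \<delta>_def)
    have t1: "\<bar>t\<bar> \<le> \<rho>" using t2 r by linarith
    have pO: "(fst q + t, snd q + 0) \<in> \<Omega>"
    proof -
      have "dist q (fst q + t, snd q + 0) = \<bar>t\<bar>"
        by (cases q) (simp add: dist_Pair_Pair dist_real_def)
      then show ?thesis using e t2 by auto
    qed
    have g: "\<psi> (fst q + t, snd q + 0) = (\<Sum>n. \<alpha> n * t^n)"
      using REP_eq[OF R t1, of 0] dser_t0[OF A t1] r unfolding \<alpha>_def by (simp add: sums_iff)
    have "laplacian \<psi> (fst q + t, snd q + 0) = dser (b1 a) t 0 + dser (b1 (swp a)) 0 t"
      by (rule REP_lap[OF R t2(1)]) (use r in simp)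
    also have "dser (b1 (swp a)) 0 t = dser (swp (b1 (swp a))) t 0" by (simp add: dser_swp)
    also have "dser (b1 a) t 0 + dser (swp (b1 (swp a))) t 0 = (\<Sum>n. \<beta> n * t^n)"
    proof -
      have "(\<lambda>n. b1 a (n,0) * t^n + swp (b1 (swp a)) (n,0) * t^n) sums (dser (b1 a) t 0 + dser (swp (b1 (swp a))) t 0)"
        by (intro sums_add dser_t0[OF A1] dser_t0[OF A2] t2)
      then show ?thesis unfolding \<beta>_def by (simp add: distrib_right sums_iff)
    qed
    finally show ?thesis using lap[OF pO] g by simp
  qed
  have a0: "\<alpha> 0 = 0" using REP_c0[OF R] q0 by (simp add: \<alpha>_def)
  have a1: "\<alpha> 1 \<noteq> 0" using a10 by (simp add: \<alpha>_def)
  show ?thesis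
    by (rule analytic_inverse_compose[of "\<rho>/2" \<delta> \<alpha> \<beta>]) (use r dl sa sb a0 a1 eq in auto)
qed

lemma vd_fst:
  assumes "(\<gamma> has_vector_derivative \<tau>) (at t)"
  shows "((\<lambda>t. fst (\<gamma> t)) has_field_derivative fst \<tau>) (at t)"
proof -
  have "((\<lambda>t. fst (\<gamma> t)) has_derivative (\<lambda>h. fst (h *\<^sub>R \<tau>))) (at t)"
    using has_derivative_fst[OF assms[unfolded has_vector_derivative_def]] .
  moreover have "(\<lambda>h. fst (h *\<^sub>R \<tau>)) = (*) (fst \<tau>)" by (auto simp: fun_eq_iff)
  ultimately show ?thesis unfolding has_field_derivative_def by simp
qed

lemma vd_snd:
  assumes "(\<gamma> has_vector_derivative \<tau>) (at t)"
  shows "((\<lambda>t. snd (\<gamma> t)) has_field_derivative snd \<tau>) (at t)"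
proof -
  have "((\<lambda>t. snd (\<gamma> t)) has_derivative (\<lambda>h. snd (h *\<^sub>R \<tau>))) (at t)"
    using has_derivative_snd[OF assms[unfolded has_vector_derivative_def]] .
  moreover have "(\<lambda>h. snd (h *\<^sub>R \<tau>)) = (*) (snd \<tau>)" by (auto simp: fun_eq_iff)
  ultimately show ?thesis unfolding has_field_derivative_def by simp
qed

lemma periodic_nat:
  assumes "\<And>t. \<gamma> (t + 1) = \<gamma> (t::real)"
  shows "\<gamma> (s + real n) = \<gamma> s"
proof (induction n)
  case (Suc n)
  have "\<gamma> (s + real (Suc n)) = \<gamma> ((s + real n) + 1)" by (simp add: algebra_simps)
  also have "\<dots> = \<gamma> (s + real n)" by (rule assms)
  finally show ?case using Suc by simp
qed simp

lemma periodic_int: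
  assumes "\<And>t. \<gamma> (t + 1) = \<gamma> (t::real)"
  shows "\<gamma> (s + of_int k) = \<gamma> s"
proof (cases k rule: int_cases2)
  case (nonneg n)
  then show ?thesis using periodic_nat[where \<gamma>=\<gamma>, OF assms, of s n] by simp
next
  case (nonpos n)
  have "\<gamma> ((s + of_int k) + real n) = \<gamma> (s + of_int k)" by (rule periodic_nat[where \<gamma>=\<gamma>, OF assms])
  then show ?thesis using nonpos by simp
qed

lemma periodic_image:
  assumes "\<And>t. \<gamma> (t + 1) = \<gamma> (t::real)"
  shows "\<gamma> t \<in> \<gamma> ` {0..1}"
proof -
  have "\<gamma> t = \<gamma> ((t - of_int \<lfloor>t\<rfloor>) + of_int \<lfloor>t\<rfloor>)" by simp
  also have "\<dots> = \<gamma> (t - of_int \<lfloor>t\<rfloor>)" by (rule periodic_int[where \<gamma>=\<gamma>, OF assms])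
  finally have e: "\<gamma> t = \<gamma> (t - of_int \<lfloor>t\<rfloor>)" .
  have "t - of_int \<lfloor>t\<rfloor> \<ge> 0" by simp
  moreover have "t - of_int \<lfloor>t\<rfloor> \<le> 1" using real_of_int_floor_add_one_gt[of t] by linarith
  ultimately show ?thesis using e by auto
qed

lemma laplacian_swap: "laplacian (\<lambda>p. \<psi> (snd p, fst p)) (x, y) = laplacian \<psi> (y, x)"
  unfolding laplacian_def by simp

theorem mainTheorem11:
  fixes \<Omega> :: "(real \<times> real) set" and \<psi> :: "real \<times> real \<Rightarrow> real" and F :: "real \<Rightarrow> real"
  assumes "open \<Omega>" and "connected \<Omega>" and "bounded \<Omega>" and "simply_connected \<Omega>"
    and "analytic_boundary \<Omega>"
    and "\<forall>p\<in>closure \<Omega>. real_analytic_at2 \<psi> p"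
    and "\<forall>p\<in>\<Omega>. critical_point \<psi> p \<longrightarrow> \<not> (p islimpt {q. critical_point \<psi> q})"
    and "continuous_on UNIV F" and "F 0 = 1"
    and "\<forall>p\<in>\<Omega>. laplacian \<psi> p = F (\<psi> p)"
    and "\<forall>p\<in>frontier \<Omega>. \<psi> p = 0 \<and> critical_point \<psi> p"
    and "\<not> real_analytic_at1 F 0"
  shows "\<forall>p\<in>\<Omega>. \<psi> p \<ge> 0"
proof (rule ccontr)
  assume "\<not> (\<forall>p\<in>\<Omega>. \<psi> p \<ge> 0)"
  then obtain p0 where p0: "p0 \<in> \<Omega>" "\<psi> p0 < 0" by force
  have oO: "open \<Omega>" using assms(1) .
  have an: "\<And>p. p \<in> closure \<Omega> \<Longrightarrow> real_analytic_at2 \<psi> p" using assms(6) by blast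
  have cont: "isCont \<psi> p" if pc: "p \<in> closure \<Omega>" for p
  proof -
    obtain a \<rho> where "REP \<psi> p a \<rho>" using analytic_REP[OF an[OF pc]] by blast
    then show ?thesis by (rule REP_isCont)
  qed
  have lap: "\<And>p. p \<in> \<Omega> \<Longrightarrow> laplacian \<psi> p = F (\<psi> p)" using assms(10) by blast
  have "real_analytic_at1 F 0"
  proof (cases "\<exists>q\<in>\<Omega>. \<psi> q = 0 \<and> \<not> critical_point \<psi> q")
    case True
    then obtain q where qO: "q \<in> \<Omega>" and q0: "\<psi> q = 0" and qc: "\<not> critical_point \<psi> q" by blast
    have qcl: "q \<in> closure \<Omega>" using qO closure_subset by blast
    obtain a \<rho> where R: "REP \<psi> q a \<rho>" using analytic_REP[OF an[OF qcl]] by blast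
    have "a (1,0) \<noteq> 0 \<or> a (0,1) \<noteq> 0" using REP_crit_iff[OF R] qc by auto
    then show ?thesis
    proof
      assume "a (1,0) \<noteq> 0"
      then show ?thesis by (rule regular_zero_analytic[OF R _ q0 oO qO lap])
    next
      assume a01: "a (0,1) \<noteq> 0"
      let ?\<psi> = "\<lambda>p. \<psi> (snd p, fst p)"
      let ?\<Omega> = "UNIV \<inter> prod.swap -` \<Omega>"
      have R': "REP ?\<psi> (snd q, fst q) (swp a) \<rho>" by (rule REP_swap[OF R])
      have o': "open ?\<Omega>" by (rule continuous_open_preimage[OF continuous_on_swap open_UNIV oO])
      have q': "(snd q, fst q) \<in> ?\<Omega>" using qO by (cases q) auto
      have lap': "laplacian ?\<psi> p = F (?\<psi> p)" if "p \<in> ?\<Omega>" for p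
      proof -
        obtain x y where p: "p = (x,y)" by force
        have "(y,x) \<in> \<Omega>" using that p by auto
        then show ?thesis unfolding p laplacian_swap using lap by simp
      qed
      have "swp a (1,0) \<noteq> 0" using a01 by (simp add: swp_def)
      moreover have "?\<psi> (snd q, fst q) = 0" using q0 by simp
      ultimately show ?thesis by (rule regular_zero_analytic[OF R' _ _ o' q' lap'])
    qed
  next
    case False
    then have allc: "\<And>q. q \<in> \<Omega> \<Longrightarrow> \<psi> q = 0 \<Longrightarrow> critical_point \<psi> q" by auto
    define Z where "Z = {p\<in>\<Omega>. \<psi> p = 0}"
    have sp: "Z sparse_in \<Omega>" unfolding sparse_in_open[OF oO]
    proof
      fix y assume yO: "y \<in> \<Omega>"
      show "\<not> y islimpt Z"
      proof (cases "\<psi> y = 0")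
        case True
        then have "critical_point \<psi> y" using allc yO by blast
        then have "\<not> y islimpt {q. critical_point \<psi> q}" using assms(7) yO by blast
        moreover have "Z \<subseteq> {q. critical_point \<psi> q}" using allc unfolding Z_def by auto
        ultimately show ?thesis using islimpt_subset by blast
      next
        case False
        have "(\<psi> \<longlongrightarrow> \<psi> y) (at y)" using cont[of y] yO closure_subset unfolding isCont_def by blast
        then have "eventually (\<lambda>z. \<psi> z \<noteq> 0) (at y)" using False by (rule tendsto_imp_eventually_ne)
        then have "eventually (\<lambda>z. z \<notin> Z) (at y)" by (rule eventually_mono) (auto simp: Z_def)
        then show ?thesis unfolding islimpt_iff_eventually by simp
      qed
    qed
    have conn: "connected (\<Omega> - Z)" by (rule sparse_imp_connected) (use assms(1,2) sp in auto)
    have c\<psi>: "continuous_on \<Omega> \<psi>"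
      using cont closure_subset by (intro continuous_at_imp_continuous_on) blast
    define Pp where "Pp = \<Omega> \<inter> \<psi> -` {0<..}"
    define Nn where "Nn = \<Omega> \<inter> \<psi> -` {..<0}"
    have oP: "open Pp" unfolding Pp_def by (rule continuous_open_preimage[OF c\<psi> oO]) simp
    have oN: "open Nn" unfolding Nn_def by (rule continuous_open_preimage[OF c\<psi> oO]) simp
    have "Pp \<inter> Nn \<inter> (\<Omega> - Z) = {}" unfolding Pp_def Nn_def by auto
    moreover have "\<Omega> - Z \<subseteq> Pp \<union> Nn" unfolding Pp_def Nn_def Z_def by auto
    ultimately have "Pp \<inter> (\<Omega> - Z) = {} \<or> Nn \<inter> (\<Omega> - Z) = {}"
      using connectedD[OF conn oP oN] by blast
    moreover have "p0 \<in> Nn \<inter> (\<Omega> - Z)" using p0 unfolding Nn_def Z_def by auto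
    ultimately have Pe: "Pp \<inter> (\<Omega> - Z) = {}" by blast
    have nonpos: "\<psi> p \<le> 0" if "p \<in> \<Omega>" for p
    proof (rule ccontr)
      assume "\<not> \<psi> p \<le> 0"
      then have "p \<in> Pp \<inter> (\<Omega> - Z)" using that unfolding Pp_def Z_def by auto
      then show False using Pe by blast
    qed
    obtain \<gamma> :: "real \<Rightarrow> real \<times> real" where
      per: "\<forall>t. \<gamma> (t + 1) = \<gamma> t" and
      dif: "\<forall>t. \<gamma> differentiable at t \<and> vector_derivative \<gamma> (at t) \<noteq> 0" and
      img: "\<gamma> ` {0..1} = frontier \<Omega>"
      using assms(5) unfolding analytic_boundary_def by blast
    have fne: "frontier \<Omega> \<noteq> {}" using img by auto
    obtain y where yF: "y \<in> frontier \<Omega>" and near: "\<And>w. w \<in> frontier \<Omega> \<Longrightarrow> dist p0 y \<le> dist p0 w"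
      using distance_attains_inf[OF frontier_closed fne] by blast
    obtain t0 where t0: "\<gamma> t0 = y" using yF img by (metis imageE)
    have yc: "y \<in> closure \<Omega>" using yF unfolding frontier_def by auto
    obtain a \<rho> where R: "REP \<psi> y a \<rho>" using analytic_REP[OF an[OF yc]] by blast
    define \<tau> where "\<tau> = vector_derivative \<gamma> (at t0)"
    have vd: "(\<gamma> has_vector_derivative \<tau>) (at t0)"
      using dif vector_derivative_works unfolding \<tau>_def by blast
    have tn: "fst \<tau> \<noteq> 0 \<or> snd \<tau> \<noteq> 0" using dif unfolding \<tau>_def by (auto simp: prod_eq_iff)
    have onF: "(fst (\<gamma> t), snd (\<gamma> t)) \<in> frontier \<Omega>" for t
      using periodic_image[of \<gamma> t] per img by simp
    have zF: "\<And>w. w \<in> frontier \<Omega> \<Longrightarrow> \<psi> w = 0" using assms(11) by blast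
    have "\<exists>p\<in>\<Omega>. \<psi> p > 0"
    proof (rule boundary_pos[OF oO p0(1) yF near R _ _ vd_fst[OF vd] vd_snd[OF vd] tn _ _ onF zF lap])
      show "critical_point \<psi> y" using assms(11) yF by blast
      show "\<psi> y = 0" using zF yF by blast
      show "fst (\<gamma> t0) = fst y" "snd (\<gamma> t0) = snd y" using t0 by auto
      show "isCont F 0" using assms(8) by (simp add: continuous_on_eq_continuous_at)
      show "F 0 = 1" by (rule assms(9))
    qed
    then show ?thesis using nonpos by force
  qed
  then show False using assms(12) by simp
qed

end
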